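(* If $n$ is odd, then $K_n$ can be (smoothly) embedded in $\mathbb{R}^{n+1}$.
   Context: $K_n=(S^1)^n/\bigl((z_1,\ldots,z_{n-1},z_n)\sim(\overline{z}_1,\ldots,\overline{z}_{n-1},-z_n)\bigr)$, where $S^1\subset\mathbb{C}$ is the unit circle and $\overline{z}$ is complex conjugation. *)

theory Defs
  imports "HOL-Analysis.Analysis"
begin

definition partial_deriv :: "'n::finite \<Rightarrow> (real^'n \<Rightarrow> 'b::real_normed_vector) \<Rightarrow> real^'n \<Rightarrow> 'b" where
  "partial_deriv i f x = frechet_derivative f (at x) (axis i 1)"

fun Ck_on :: "nat \<Rightarrow> (real^'n::finite) set \<Rightarrow> (real^'n \<Rightarrow> 'b::real_normed_vector) \<Rightarrow> bool" where
  "Ck_on 0 U f = continuous_on U f"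
| "Ck_on (Suc k) U f = (f differentiable_on U \<and> (\<forall>i. Ck_on k U (partial_deriv i f)))"

definition smooth_on :: "(real^'n::finite) set \<Rightarrow> (real^'n \<Rightarrow> 'b::real_normed_vector) \<Rightarrow> bool" where
  "smooth_on U f = (\<forall>k. Ck_on k U f)"

definition torus :: "(complex^'n::finite) set" where
  "torus = {z. \<forall>i. norm (z $ i) = 1}"

definition angle_param :: "real^'n::finite \<Rightarrow> complex^'n" where
  "angle_param t = (\<chi> i. cis (t $ i))"

definition Kinv :: "'n::finite \<Rightarrow> complex^'n \<Rightarrow> complex^'n" where
  "Kinv k z = (\<chi> i. if i = k then - (z $ i) else cnj (z $ i))"

text \<open>A smooth embedding of K_n = torus / Kinv k into real^'m, described by its lift F to the
  torus: F is smooth (its composite with the angle parametrisation is smooth), constant on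
  orbits of the involution, injective on the orbit space, and an immersion.\<close>
definition smooth_embedding_K :: "'n::finite \<Rightarrow> (complex^'n \<Rightarrow> real^'m::finite) \<Rightarrow> bool" where
  "smooth_embedding_K k F \<longleftrightarrow>
     smooth_on UNIV (F \<circ> angle_param) \<and>
     (\<forall>z\<in>torus. F (Kinv k z) = F z) \<and>
     (\<forall>z\<in>torus. \<forall>w\<in>torus. F z = F w \<longrightarrow> w = z \<or> w = Kinv k z) \<and>
     (\<forall>t. \<exists>D. ((F \<circ> angle_param) has_derivative D) (at t) \<and> inj D)"

end

theory Submission
  imports Defs
begin


lemma vec_has_derivative_comp:
  fixes G :: "real^'n::finite \<Rightarrow> real^'m::finite"
  assumes "\<And>j. ((\<lambda>x. G x $ j) has_derivative D j) (at t)"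
  shows "(G has_derivative (\<lambda>h. \<chi> j. D j h)) (at t)"
proof -
  have "\<forall>i\<in>Basis. ((\<lambda>x. G x \<bullet> i) has_derivative (\<lambda>h. (\<chi> j. D j h) \<bullet> i)) (at t)"
  proof
    fix i :: "real^'m" assume "i \<in> Basis"
    then obtain j where i: "i = axis j 1" by (auto simp: Basis_vec_def)
    show "((\<lambda>x. G x \<bullet> i) has_derivative (\<lambda>h. (\<chi> j. D j h) \<bullet> i)) (at t)"
      using assms[of j] by (simp add: i inner_axis)
  qed
  then show ?thesis using has_derivative_componentwise_within by blast
qed

lemma vec_differentiable:
  fixes G :: "real^'n::finite \<Rightarrow> real^'m::finite"
  assumes "\<And>j. (\<lambda>x. G x $ j) differentiable (at t)"
  shows "G differentiable (at t)"
proof -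
  have "\<And>j. ((\<lambda>x. G x $ j) has_derivative frechet_derivative (\<lambda>x. G x $ j) (at t)) (at t)"
    using assms frechet_derivative_works by blast
  from vec_has_derivative_comp[OF this] show ?thesis unfolding differentiable_def by blast
qed

lemma comp_has_derivative:
  fixes G :: "real^'n::finite \<Rightarrow> real^'m::finite"
  assumes "(G has_derivative D) (at t)"
  shows "((\<lambda>x. G x $ j) has_derivative (\<lambda>h. D h $ j)) (at t)"
  using bounded_linear.has_derivative[OF bounded_linear_vec_nth assms] .

lemma pd_comp:
  fixes G :: "real^'n::finite \<Rightarrow> real^'m::finite"
  assumes "G differentiable (at t)"
  shows "partial_deriv i G t $ j = partial_deriv i (\<lambda>x. G x $ j) t"
proof -
  have "(\<lambda>h. frechet_derivative G (at t) h $ j) = frechet_derivative (\<lambda>x. G x $ j) (at t)"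
    using comp_has_derivative[OF assms[unfolded frechet_derivative_works], of j]
    by (rule frechet_derivative_at)
  then show ?thesis unfolding partial_deriv_def by (simp add: fun_eq_iff)
qed

lemma hd_nth: "((\<lambda>t::real^'n::finite. t $ j) has_derivative (\<lambda>h. h $ j)) (at t)"
  by (rule bounded_linear.has_derivative[OF bounded_linear_vec_nth has_derivative_ident])

lemma hd_cos: "((\<lambda>t::real^'n::finite. cos (t $ j)) has_derivative (\<lambda>h. h $ j * - sin (t $ j))) (at t)"
  using has_derivative_cos[OF hd_nth, of j t] .

lemma hd_sin: "((\<lambda>t::real^'n::finite. sin (t $ j)) has_derivative (\<lambda>h. h $ j * cos (t $ j))) (at t)"
  using has_derivative_sin[OF hd_nth, of j t] .

inductive sm :: "(real^'n::finite \<Rightarrow> real) \<Rightarrow> bool" where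
  sm_const: "sm (\<lambda>t. c)"
| sm_cos: "sm (\<lambda>t. cos (t $ i))"
| sm_sin: "sm (\<lambda>t. sin (t $ i))"
| sm_add: "sm f \<Longrightarrow> sm g \<Longrightarrow> sm (\<lambda>t. f t + g t)"
| sm_mult: "sm f \<Longrightarrow> sm g \<Longrightarrow> sm (\<lambda>t. f t * g t)"

lemma sm_diff: "sm f \<Longrightarrow> sm g \<Longrightarrow> sm (\<lambda>t. f t - g t)"
proof -
  assume "sm f" "sm g"
  then have "sm (\<lambda>t. f t + (\<lambda>t. -1) t * g t)" by (intro sm_add sm_mult sm_const)
  then show ?thesis by simp
qed

lemma sm_differentiable: "sm f \<Longrightarrow> f differentiable (at t)"
proof (induction rule: sm.induct)
  case (sm_cos i)
  show ?case unfolding differentiable_def using hd_cos by blast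
next
  case (sm_sin i)
  show ?case unfolding differentiable_def using hd_sin by blast
qed auto

lemma sm_pd: "sm f \<Longrightarrow> sm (partial_deriv i f)"
proof (induction rule: sm.induct)
  case (sm_const c)
  then show ?case unfolding partial_deriv_def by (simp add: sm.sm_const)
next
  case (sm_cos j)
  have "frechet_derivative (\<lambda>t. cos (t $ j)) (at t) = (\<lambda>h. h $ j * - sin (t $ j))" for t :: "real^'a"
    by (rule frechet_derivative_at[symmetric, OF hd_cos])
  then have "partial_deriv i (\<lambda>t. cos (t $ j)) = (\<lambda>t. (\<lambda>t. if i = j then -1 else 0) t * sin (t $ j))"
    unfolding partial_deriv_def by (auto simp: fun_eq_iff axis_def)
  then show ?case by (simp only:) (intro sm.intros)
next
  case (sm_sin j)
  have "frechet_derivative (\<lambda>t. sin (t $ j)) (at t) = (\<lambda>h. h $ j * cos (t $ j))" for t :: "real^'a"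
    by (rule frechet_derivative_at[symmetric, OF hd_sin])
  then have "partial_deriv i (\<lambda>t. sin (t $ j)) = (\<lambda>t. (\<lambda>t. if i = j then 1 else 0) t * cos (t $ j))"
    unfolding partial_deriv_def by (auto simp: fun_eq_iff axis_def)
  then show ?case by (simp only:) (intro sm.intros)
next
  case (sm_add f g)
  have "partial_deriv i (\<lambda>t. f t + g t) = (\<lambda>t. partial_deriv i f t + partial_deriv i g t)"
  proof
    fix t
    have "((\<lambda>t. f t + g t) has_derivative (\<lambda>h. frechet_derivative f (at t) h + frechet_derivative g (at t) h)) (at t)"
      using sm_add.hyps sm_differentiable frechet_derivative_works has_derivative_add by blast
    then have "frechet_derivative (\<lambda>t. f t + g t) (at t) = (\<lambda>h. frechet_derivative f (at t) h + frechet_derivative g (at t) h)"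
      by (rule frechet_derivative_at[symmetric])
    then show "partial_deriv i (\<lambda>t. f t + g t) t = partial_deriv i f t + partial_deriv i g t"
      unfolding partial_deriv_def by simp
  qed
  then show ?case using sm_add.IH by (simp add: sm.sm_add)
next
  case (sm_mult f g)
  have "partial_deriv i (\<lambda>t. f t * g t) = (\<lambda>t. f t * partial_deriv i g t + partial_deriv i f t * g t)"
  proof
    fix t
    have "((\<lambda>t. f t * g t) has_derivative (\<lambda>h. f t * frechet_derivative g (at t) h + frechet_derivative f (at t) h * g t)) (at t)"
      using sm_mult.hyps sm_differentiable frechet_derivative_works has_derivative_mult by blast
    then have "frechet_derivative (\<lambda>t. f t * g t) (at t) = (\<lambda>h. f t * frechet_derivative g (at t) h + frechet_derivative f (at t) h * g t)"
      by (rule frechet_derivative_at[symmetric])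
    then show "partial_deriv i (\<lambda>t. f t * g t) t = f t * partial_deriv i g t + partial_deriv i f t * g t"
      unfolding partial_deriv_def by simp
  qed
  then show ?case using sm_mult by (simp add: sm.sm_add sm.sm_mult)
qed

lemma smv_Ck:
  fixes G :: "real^'n::finite \<Rightarrow> real^'m::finite"
  assumes "\<And>j. sm (\<lambda>t. G t $ j)"
  shows "Ck_on k UNIV G"
  using assms
proof (induction k arbitrary: G)
  case 0
  then have "G differentiable (at t)" for t using vec_differentiable sm_differentiable by blast
  then show ?case by (simp add: differentiable_imp_continuous_on differentiable_on_def differentiable_at_withinI)
next
  case (Suc k)
  then have d: "G differentiable (at t)" for t using vec_differentiable sm_differentiable by blast
  have "sm (\<lambda>t. partial_deriv i G t $ j)" for i j
    using pd_comp[OF d] sm_pd[OF Suc.prems[of j]] by (simp add: pd_comp[OF d])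
  then show ?case using Suc.IH d by (auto simp: differentiable_on_def differentiable_at_withinI)
qed



definition c1 :: "nat \<Rightarrow> real" where "c1 n = 8^n + 1"
definition c2 :: "nat \<Rightarrow> real" where "c2 n = 2 * 8^n + 2"

fun S :: "('n \<times> 'n) list \<Rightarrow> ('n \<Rightarrow> real) \<Rightarrow> ('n \<Rightarrow> real) \<Rightarrow> real" where
  "S [] co si = 1"
| "S ((p,q)#ps) co si = c2 (length ps) + (c1 (length ps) + S ps co si * co p) * co q"

fun OY :: "'n \<Rightarrow> ('n \<times> 'n) list \<Rightarrow> ('n \<Rightarrow> real) \<Rightarrow> ('n \<Rightarrow> real) \<Rightarrow> 'n \<Rightarrow> real" where
  "OY k [] co si j = 0"
| "OY k ((p,q)#ps) co si j =
    (if j = p then (S ps co si * si p) * co k - ((c1 (length ps) + S ps co si * co p) * si q) * si k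
     else if j = q then (S ps co si * si p) * si k + ((c1 (length ps) + S ps co si * co p) * si q) * co k
     else OY k ps co si j)"

definition out :: "'n \<Rightarrow> ('n \<times> 'n) list \<Rightarrow> ('n \<Rightarrow> real) \<Rightarrow> ('n \<Rightarrow> real) \<Rightarrow> 'n option \<Rightarrow> real" where
  "out k ps co si ox = (case ox of None \<Rightarrow> S ps co si * (co k * co k - si k * si k)
     | Some j \<Rightarrow> if j = k then S ps co si * (2 * co k * si k) else OY k ps co si j)"

definition FF :: "'n::finite \<Rightarrow> ('n \<times> 'n) list \<Rightarrow> ('m::finite \<Rightarrow> 'n option) \<Rightarrow> complex^'n \<Rightarrow> real^'m" where
  "FF k ps \<beta> z = (\<chi> j. out k ps (\<lambda>i. Re (z$i)) (\<lambda>i. Im (z$i)) (\<beta> j))"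

definition fl :: "('n \<times> 'n) list \<Rightarrow> 'n list" where
  "fl ps = concat (map (\<lambda>(a,b). [a,b]) ps)"

lemma fl_simps[simp]: "fl [] = []" "fl ((p,q)#ps) = p # q # fl ps"
  by (auto simp: fl_def)

lemma S_bounds:
  assumes "\<And>i. \<bar>co i\<bar> \<le> 1"
  shows "1 \<le> S ps co si \<and> S ps co si \<le> 8 ^ length ps"
proof (induction ps)
  case Nil then show ?case by simp
next
  case (Cons pq ps)
  obtain p q where pq: "pq = (p,q)" by fastforce
  let ?n = "length ps"
  let ?T = "S ps co si"
  let ?m = "c1 ?n + ?T * co p"
  have T: "1 \<le> ?T" "?T \<le> 8 ^ ?n" using Cons by auto
  have "\<bar>?T * co p\<bar> = ?T * \<bar>co p\<bar>" using T by (simp add: abs_mult)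
  also have "\<dots> \<le> ?T" using T assms[of p] by (intro mult_left_le) auto
  finally have a: "\<bar>?T * co p\<bar> \<le> 8 ^ ?n" using T by linarith
  have m1: "1 \<le> ?m" "?m \<le> 2 * 8 ^ ?n + 1" using a by (auto simp: c1_def)
  have "\<bar>?m * co q\<bar> = ?m * \<bar>co q\<bar>" using m1 by (simp add: abs_mult)
  also have "\<dots> \<le> ?m" using m1 assms[of q] by (intro mult_left_le) auto
  finally have b: "\<bar>?m * co q\<bar> \<le> 2 * 8 ^ ?n + 1" using m1 by linarith
  have h: "(1::real) \<le> 8 ^ ?n" by simp
  have e1: "S (pq#ps) co si = 2*8^?n + 2 + ?m * co q" by (simp add: pq c2_def)
  have e2: "(8::real)^length (pq#ps) = 8 * 8^?n" by simp
  from b have "?m * co q \<le> 2 * 8 ^ ?n + 1" "- (?m * co q) \<le> 2 * 8 ^ ?n + 1" by (simp_all only: abs_le_iff)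
  then show ?case unfolding e1 e2 using h by linarith
qed

lemma S_inv: "k \<notin> set (fl ps) \<Longrightarrow> S ps (\<lambda>i. if i = k then - co i else co i) (\<lambda>i. - si i) = S ps co si"
  by (induction ps co si rule: S.induct) auto

lemma OY_inv: "k \<notin> set (fl ps) \<Longrightarrow> OY k ps (\<lambda>i. if i = k then - co i else co i) (\<lambda>i. - si i) j = OY k ps co si j"
  by (induction k ps co si j rule: OY.induct) (auto simp: S_inv)

lemma rot0:
  fixes a b x y :: real
  assumes "a^2 + b^2 = 1" "x * a - y * b = 0" "x * b + y * a = 0"
  shows "x = 0 \<and> y = 0"
proof -
  have "a*(x*a - y*b) + b*(x*b + y*a) = x*(a^2+b^2)" by (simp add: algebra_simps power2_eq_square)
  moreover have "(-b)*(x*a - y*b) + a*(x*b + y*a) = y*(a^2+b^2)" by (simp add: algebra_simps power2_eq_square)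
  ultimately have "x*(a^2+b^2) = 0" "y*(a^2+b^2) = 0" using assms(2,3) by simp_all
  then show ?thesis using assms(1) by simp
qed

lemma sq_eq:
  fixes m m' c s c' s' :: real
  assumes "m > 0" "m' > 0" "m * c = m' * c'" "m * s = m' * s'" "c^2 + s^2 = 1" "c'^2 + s'^2 = 1"
  shows "m = m' \<and> c = c' \<and> s = s'"
proof -
  have x: "(x * y) ^ 2 + (x * z) ^ 2 = x ^ 2 * (y ^ 2 + z ^ 2)" for x y z :: real
    by (simp add: power_mult_distrib algebra_simps)
  have "m ^ 2 = (m * c) ^ 2 + (m * s) ^ 2" using assms(5) x by simp
  also have "\<dots> = (m' * c') ^ 2 + (m' * s') ^ 2" using assms(3,4) by simp
  also have "\<dots> = m' ^ 2" using assms(6) x by simp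
  finally have "m = m'" using assms(1,2) by (simp add: power2_eq_iff_nonneg)
  then show ?thesis using assms by auto
qed

lemma unit_abs: "(c::real)^2 + s^2 = 1 \<Longrightarrow> \<bar>c\<bar> \<le> 1"
  by (metis abs_le_square_iff abs_one le_add_same_cancel1 one_power2 zero_le_power2)

lemma OY_inj:
  assumes "distinct (fl ps)" "k \<notin> set (fl ps)"
    and un: "\<forall>i. co i^2 + si i^2 = 1" "\<forall>i. co' i^2 + si' i^2 = 1"
    and sg: "\<sigma> = 1 \<or> \<sigma> = -1" and ck: "co' k = \<sigma> * co k" "si' k = \<sigma> * si k"
    and "S ps co si = S ps co' si'" "\<forall>j\<in>set (fl ps). OY k ps co si j = OY k ps co' si' j"
  shows "\<forall>i\<in>set (fl ps). co' i = co i \<and> si' i = \<sigma> * si i"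
  using assms(1,2,8,9)
proof (induction ps)
  case Nil then show ?case by simp
next
  case (Cons pq ps)
  obtain p q where pq: "pq = (p,q)" by fastforce
  let ?n = "length ps"
  define T where "T = S ps co si"
  define T' where "T' = S ps co' si'"
  define m where "m = c1 ?n + T * co p"
  define m' where "m' = c1 ?n + T' * co' p"
  have d: "p \<noteq> q" "p \<noteq> k" "q \<noteq> k" "p \<notin> set (fl ps)" "q \<notin> set (fl ps)" "distinct (fl ps)" "k \<notin> set (fl ps)"
    using Cons.prems by (auto simp: pq)
  have ab: "\<bar>co i\<bar> \<le> 1" "\<bar>co' i\<bar> \<le> 1" for i using un unit_abs by blast+
  have T1: "T \<ge> 1" "T' \<ge> 1" using S_bounds ab unfolding T_def T'_def by blast+
  have "\<bar>T * co p\<bar> \<le> 8 ^ ?n" "\<bar>T' * co' p\<bar> \<le> 8 ^ ?n"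
  proof -
    have "\<bar>T * co p\<bar> = T * \<bar>co p\<bar>" "\<bar>T' * co' p\<bar> = T' * \<bar>co' p\<bar>" using T1 by (simp_all add: abs_mult)
    moreover have "T * \<bar>co p\<bar> \<le> T" "T' * \<bar>co' p\<bar> \<le> T'" using T1 ab by (intro mult_left_le; simp)+
    moreover have "T \<le> 8 ^ ?n" "T' \<le> 8 ^ ?n" using S_bounds ab unfolding T_def T'_def by blast+
    ultimately show "\<bar>T * co p\<bar> \<le> 8 ^ ?n" "\<bar>T' * co' p\<bar> \<le> 8 ^ ?n" by linarith+
  qed
  then have m1: "m \<ge> 1" "m' \<ge> 1" unfolding m_def m'_def c1_def by (simp_all add: abs_le_iff)
  have E1: "(T * si p) * co k - (m * si q) * si k = (T' * si' p) * co' k - (m' * si' q) * si' k"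
    using Cons.prems(4) d by (auto simp: pq T_def T'_def m_def m'_def)
  have E2: "(T * si p) * si k + (m * si q) * co k = (T' * si' p) * si' k + (m' * si' q) * co' k"
    using Cons.prems(4) d by (auto simp: pq T_def T'_def m_def m'_def)
  have ss: "\<sigma> * \<sigma> = 1" using sg by auto
  have "(T * si p - \<sigma> * (T' * si' p)) * co k - (m * si q - \<sigma> * (m' * si' q)) * si k = 0"
    using E1 ck by (simp add: algebra_simps)
  moreover have "(T * si p - \<sigma> * (T' * si' p)) * si k + (m * si q - \<sigma> * (m' * si' q)) * co k = 0"
    using E2 ck by (simp add: algebra_simps)
  ultimately have uv0: "T * si p - \<sigma> * (T' * si' p) = 0" "m * si q - \<sigma> * (m' * si' q) = 0"
    using rot0[of "co k" "si k" "T * si p - \<sigma> * (T' * si' p)" "m * si q - \<sigma> * (m' * si' q)"] un by auto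
  then have uv: "T * si p = \<sigma> * (T' * si' p)" "m * si q = \<sigma> * (m' * si' q)" by simp_all
  have "m * co q = m' * co' q" using Cons.prems(3) by (simp add: pq m_def m'_def T_def T'_def)
  moreover have "m * si q = m' * (\<sigma> * si' q)" using uv by simp
  moreover have "(\<sigma> * si' q)^2 = si' q ^2" using ss by (simp add: power2_eq_square algebra_simps)
  ultimately have q1: "m = m'" "co q = co' q" "si q = \<sigma> * si' q"
    using sq_eq[of m m' "co q" "co' q" "si q" "\<sigma> * si' q"] m1 un by auto
  then have "T * co p = T' * co' p" unfolding m_def m'_def by simp
  moreover have "T * si p = T' * (\<sigma> * si' p)" using uv by simp
  moreover have "(\<sigma> * si' p)^2 = si' p ^2" using ss by (simp add: power2_eq_square algebra_simps)
  ultimately have p1: "T = T'" "co p = co' p" "si p = \<sigma> * si' p"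
    using sq_eq[of T T' "co p" "co' p" "si p" "\<sigma> * si' p"] T1 un by auto
  have "\<forall>j\<in>set (fl ps). OY k ps co si j = OY k ps co' si' j"
  proof
    fix j assume j: "j \<in> set (fl ps)"
    then have "j \<noteq> p" "j \<noteq> q" using d by auto
    then show "OY k ps co si j = OY k ps co' si' j" using Cons.prems(4) j by (auto simp: pq)
  qed
  then have IH: "\<forall>i\<in>set (fl ps). co' i = co i \<and> si' i = \<sigma> * si i"
    using Cons.IH d p1 unfolding T_def T'_def by blast
  have "si' q = \<sigma> * si q" "si' p = \<sigma> * si p" using q1 p1 ss by (simp_all add: algebra_simps)
  then show ?case using IH q1 p1 by (auto simp: pq)
qed

lemma FF_inv:
  assumes "k \<notin> set (fl ps)"
  shows "FF k ps \<beta> (Kinv k z) = FF k ps \<beta> z"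
proof -
  have r: "(\<lambda>i. Re (Kinv k z $ i)) = (\<lambda>i. if i = k then - Re (z $ i) else Re (z $ i))"
    "(\<lambda>i. Im (Kinv k z $ i)) = (\<lambda>i. - Im (z $ i))" by (auto simp: Kinv_def fun_eq_iff)
  show ?thesis unfolding FF_def r
    by (auto simp: out_def S_inv[OF assms] OY_inv[OF assms] vec_eq_iff split: option.splits)
qed

lemma FF_inj:
  assumes dist: "distinct (fl ps)" and cov: "set (fl ps) = UNIV - {k}" and "surj \<beta>"
    and zt: "z \<in> torus" and wt: "w \<in> torus" and eq: "FF k ps \<beta> z = FF k ps \<beta> w"
  shows "w = z \<or> w = Kinv k z"
proof -
  define co where "co = (\<lambda>i. Re (z $ i))"
  define si where "si = (\<lambda>i. Im (z $ i))"
  define co' where "co' = (\<lambda>i. Re (w $ i))"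
  define si' where "si' = (\<lambda>i. Im (w $ i))"
  have kn: "k \<notin> set (fl ps)" using cov by auto
  have O: "out k ps co si x = out k ps co' si' x" for x
  proof -
    obtain j where "x = \<beta> j" using \<open>surj \<beta>\<close> by (metis surjD)
    then show ?thesis using eq unfolding FF_def co_def si_def co'_def si'_def by (simp add: vec_eq_iff)
  qed
  have un: "\<forall>i. co i^2 + si i^2 = 1" "\<forall>i. co' i^2 + si' i^2 = 1"
    using zt wt by (auto simp: torus_def co_def si_def co'_def si'_def simp flip: cmod_power2)
  have ab: "\<bar>co i\<bar> \<le> 1" "\<bar>co' i\<bar> \<le> 1" for i using un unit_abs by blast+
  define T where "T = S ps co si"
  define T' where "T' = S ps co' si'"
  have T1: "T \<ge> 1" "T' \<ge> 1" using S_bounds ab unfolding T_def T'_def by blast+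
  have e1: "T * Re ((z$k)^2) = T' * Re ((w$k)^2)" using O[of None]
    by (simp add: out_def T_def T'_def co_def si_def co'_def si'_def Re_power2 power2_eq_square)
  have e2: "T * Im ((z$k)^2) = T' * Im ((w$k)^2)" using O[of "Some k"]
    by (simp add: out_def T_def T'_def co_def si_def co'_def si'_def Im_power2 power2_eq_square mult.assoc mult.commute[of "Im _"])
  have n1: "Re ((z$k)^2) ^ 2 + Im ((z$k)^2) ^ 2 = 1" "Re ((w$k)^2) ^ 2 + Im ((w$k)^2) ^ 2 = 1"
    using zt wt by (auto simp: torus_def norm_power simp flip: cmod_power2)
  from sq_eq[OF _ _ e1 e2 n1] T1 have TT: "T = T'" and "(z$k)^2 = (w$k)^2"
    by (auto intro: complex_eqI)
  then have "(w$k - z$k) * (w$k + z$k) = 0" by (simp add: algebra_simps power2_eq_square)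
  then have "w$k = z$k \<or> w$k = - z$k" by (auto simp: add_eq_0_iff)
  then obtain \<sigma> :: real where sg: "\<sigma> = 1 \<or> \<sigma> = -1" and wk: "w$k = of_real \<sigma> * z$k" by force
  have ck: "co' k = \<sigma> * co k" "si' k = \<sigma> * si k" using wk by (auto simp: co_def co'_def si_def si'_def)
  have "\<forall>j\<in>set (fl ps). OY k ps co si j = OY k ps co' si' j"
  proof
    fix j assume "j \<in> set (fl ps)"
    then have "j \<noteq> k" using kn by auto
    then show "OY k ps co si j = OY k ps co' si' j" using O[of "Some j"] by (simp add: out_def)
  qed
  from OY_inj[OF dist kn un sg ck TT[unfolded T_def T'_def] this]
  have R: "\<And>i. i \<noteq> k \<Longrightarrow> co' i = co i \<and> si' i = \<sigma> * si i" using cov by auto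
  from sg show ?thesis
  proof
    assume "\<sigma> = 1"
    have "w $ i = z $ i" for i
      using R[of i] wk \<open>\<sigma> = 1\<close> by (cases "i = k") (auto simp: co_def si_def co'_def si'_def intro: complex_eqI)
    then have "w = z" by (simp add: vec_eq_iff)
    then show ?thesis by simp
  next
    assume "\<sigma> = -1"
    have "w $ i = Kinv k z $ i" for i
      using R[of i] wk \<open>\<sigma> = -1\<close> by (cases "i = k") (auto simp: Kinv_def co_def si_def co'_def si'_def intro: complex_eqI)
    then have "w = Kinv k z" by (simp add: vec_eq_iff)
    then show ?thesis by simp
  qed
qed



definition Sf :: "('n::finite \<times> 'n) list \<Rightarrow> real^'n \<Rightarrow> real" where
  "Sf ps t = S ps (\<lambda>i. cos (t$i)) (\<lambda>i. sin (t$i))"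
definition OYf :: "'n::finite \<Rightarrow> ('n \<times> 'n) list \<Rightarrow> real^'n \<Rightarrow> 'n \<Rightarrow> real" where
  "OYf k ps t j = OY k ps (\<lambda>i. cos (t$i)) (\<lambda>i. sin (t$i)) j"

lemma Sf_cons: "Sf ((p,q)#ps) = (\<lambda>t. c2 (length ps) + (c1 (length ps) + Sf ps t * cos (t$p)) * cos (t$q))"
  by (simp add: Sf_def fun_eq_iff)

lemma OYf_cons_p: "(\<lambda>t. OYf k ((p,q)#ps) t p) = (\<lambda>t. (Sf ps t * sin (t$p)) * cos (t$k) - ((c1 (length ps) + Sf ps t * cos (t$p)) * sin (t$q)) * sin (t$k))"
  by (simp add: Sf_def OYf_def fun_eq_iff)

lemma OYf_cons_q: "p \<noteq> q \<Longrightarrow> (\<lambda>t. OYf k ((p,q)#ps) t q) = (\<lambda>t. (Sf ps t * sin (t$p)) * sin (t$k) + ((c1 (length ps) + Sf ps t * cos (t$p)) * sin (t$q)) * cos (t$k))"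
  by (simp add: Sf_def OYf_def fun_eq_iff)

lemma OYf_cons_j: "j \<noteq> p \<Longrightarrow> j \<noteq> q \<Longrightarrow> (\<lambda>t. OYf k ((p,q)#ps) t j) = (\<lambda>t. OYf k ps t j)"
  by (simp add: OYf_def fun_eq_iff)

lemma sm_Sf: "sm (Sf ps)"
proof (induction ps)
  case Nil then show ?case by (simp add: Sf_def sm_const)
next
  case (Cons pq ps)
  obtain p q where pq: "pq = (p,q)" by fastforce
  show ?case unfolding pq Sf_cons by (intro sm_add sm_mult sm_const sm_cos Cons.IH)
qed

lemma sm_OYf: "sm (\<lambda>t. OYf k ps t j)"
proof (induction ps)
  case Nil then show ?case by (simp add: OYf_def sm_const)
next
  case (Cons pq ps)
  obtain p q where pq: "pq = (p,q)" by fastforce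
  show ?case
  proof (cases "j = p")
    case True then show ?thesis unfolding pq True OYf_cons_p
      by (intro sm_add sm_diff sm_mult sm_const sm_cos sm_sin sm_Sf)
  next
    case f: False
    show ?thesis
    proof (cases "j = q")
      case True then show ?thesis using f unfolding pq using OYf_cons_q[of p q k ps]
        by simp (intro sm_add sm_diff sm_mult sm_const sm_cos sm_sin sm_Sf)
    next
      case False then show ?thesis using f Cons.IH unfolding pq by (simp add: OYf_cons_j)
    qed
  qed
qed

lemma sm_out: "sm (\<lambda>t. out k ps (\<lambda>i. cos (t$i)) (\<lambda>i. sin (t$i)) x)"
proof (cases x)
  case None
  have "sm (\<lambda>t. Sf ps t * (cos (t$k) * cos (t$k) - sin (t$k) * sin (t$k)))"
    by (intro sm_add sm_diff sm_mult sm_const sm_cos sm_sin sm_Sf)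
  then show ?thesis using None by (simp add: out_def Sf_def)
next
  case (Some j)
  have "sm (\<lambda>t. Sf ps t * ((\<lambda>t. 2) t * cos (t$k) * sin (t$k)))"
    by (intro sm_add sm_diff sm_mult sm_const sm_cos sm_sin sm_Sf)
  then show ?thesis using Some sm_OYf[of k ps j] by (cases "j = k") (simp_all add: out_def Sf_def OYf_def)
qed

lemma FF_angle: "(FF k ps \<beta> \<circ> angle_param) = (\<lambda>t. \<chi> j. out k ps (\<lambda>i. cos (t$i)) (\<lambda>i. sin (t$i)) (\<beta> j))"
  by (simp add: fun_eq_iff FF_def angle_param_def)

lemma FF_smooth: "smooth_on UNIV (FF k ps \<beta> \<circ> angle_param)"
  unfolding smooth_on_def FF_angle by (intro allI smv_Ck) (simp add: sm_out)

lemma Sf_ge1: "Sf ps t \<ge> 1"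
  unfolding Sf_def using S_bounds[of "\<lambda>i. cos (t$i)"] by auto

lemma Sf_le: "Sf ps t \<le> 8 ^ length ps"
  unfolding Sf_def using S_bounds[of "\<lambda>i. cos (t$i)"] by auto

lemma imm:
  assumes "distinct (fl ps)" "k \<notin> set (fl ps)" and hk: "h$k = 0"
    and "frechet_derivative (Sf ps) (at t) h = 0"
    and "\<forall>j\<in>set (fl ps). frechet_derivative (\<lambda>t. OYf k ps t j) (at t) h = 0"
  shows "\<forall>i\<in>set (fl ps). h$i = 0"
  using assms(1,2,4,5)
proof (induction ps)
  case Nil then show ?case by simp
next
  case (Cons pq ps)
  obtain p q where pq: "pq = (p,q)" by fastforce
  have d: "p \<noteq> q" "p \<noteq> k" "q \<noteq> k" "p \<notin> set (fl ps)" "q \<notin> set (fl ps)" "distinct (fl ps)" "k \<notin> set (fl ps)"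
    using Cons.prems by (auto simp: pq)
  let ?n = "length ps"
  define DS where "DS = frechet_derivative (Sf ps) (at t)"
  have d0: "(Sf ps has_derivative DS) (at t)"
    unfolding DS_def using sm_differentiable[OF sm_Sf] frechet_derivative_works by blast
  note dm = has_derivative_add[OF has_derivative_const[of "c1 ?n"] has_derivative_mult[OF d0 hd_cos[of p]]]
  note dS' = has_derivative_add[OF has_derivative_const[of "c2 ?n"] has_derivative_mult[OF dm hd_cos[of q]]]
  note dYp = has_derivative_mult[OF d0 hd_sin[of p]]
  note dYq = has_derivative_mult[OF dm hd_sin[of q]]
  note dOp = has_derivative_diff[OF has_derivative_mult[OF dYp hd_cos[of k]] has_derivative_mult[OF dYq hd_sin[of k]]]
  note dOq = has_derivative_add[OF has_derivative_mult[OF dYp hd_sin[of k]] has_derivative_mult[OF dYq hd_cos[of k]]]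
  define S0 where "S0 = Sf ps t"
  define m where "m = c1 ?n + S0 * cos (t$p)"
  define dmv where "dmv = DS h * cos (t$p) - S0 * sin (t$p) * h$p"
  have m1: "m \<ge> 1"
  proof -
    have "\<bar>S0 * cos (t$p)\<bar> \<le> S0" using Sf_ge1[of ps t] unfolding S0_def
      by (simp add: abs_mult mult_left_le)
    then show ?thesis using Sf_le[of ps t] unfolding m_def S0_def c1_def by (simp add: abs_le_iff)
  qed
  have S0: "S0 \<ge> 1" unfolding S0_def by (rule Sf_ge1)
  have e1: "frechet_derivative (Sf ((p,q)#ps)) (at t) h = dmv * cos (t$q) - m * sin (t$q) * h$q"
    unfolding Sf_cons frechet_derivative_at[OF dS', symmetric]
    by (simp add: dmv_def m_def S0_def algebra_simps)
  have e2: "frechet_derivative (\<lambda>t. OYf k ((p,q)#ps) t p) (at t) h =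
     (DS h * sin (t$p) + S0 * cos (t$p) * h$p) * cos (t$k) - (dmv * sin (t$q) + m * cos (t$q) * h$q) * sin (t$k)"
    unfolding OYf_cons_p frechet_derivative_at[OF dOp, symmetric]
    by (simp add: dmv_def m_def S0_def algebra_simps hk)
  have e3: "frechet_derivative (\<lambda>t. OYf k ((p,q)#ps) t q) (at t) h =
     (DS h * sin (t$p) + S0 * cos (t$p) * h$p) * sin (t$k) + (dmv * sin (t$q) + m * cos (t$q) * h$q) * cos (t$k)"
    unfolding OYf_cons_q[OF d(1)] frechet_derivative_at[OF dOq, symmetric]
    by (simp add: dmv_def m_def S0_def algebra_simps hk)
  have z2: "frechet_derivative (\<lambda>t. OYf k ((p,q)#ps) t p) (at t) h = 0"
       "frechet_derivative (\<lambda>t. OYf k ((p,q)#ps) t q) (at t) h = 0"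
       "frechet_derivative (Sf ((p,q)#ps)) (at t) h = 0"
    using Cons.prems by (auto simp: pq)
  have A: "DS h * sin (t$p) + S0 * cos (t$p) * h$p = 0 \<and> dmv * sin (t$q) + m * cos (t$q) * h$q = 0"
    using rot0[of "cos (t$k)" "sin (t$k)" "DS h * sin (t$p) + S0 * cos (t$p) * h$p" "dmv * sin (t$q) + m * cos (t$q) * h$q"] z2 e2 e3 by simp
  have B: "dmv = 0 \<and> m * h$q = 0"
    using rot0[of "cos (t$q)" "sin (t$q)" dmv "m * h$q"] A z2 e1 by (simp add: algebra_simps)
  then have hq: "h$q = 0" using m1 by simp
  have C: "DS h = 0 \<and> S0 * h$p = 0"
    using rot0[of "cos (t$p)" "sin (t$p)" "DS h" "S0 * h$p"] A B unfolding dmv_def by (simp add: algebra_simps)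
  then have hp: "h$p = 0" using S0 by simp
  have "\<forall>j\<in>set (fl ps). frechet_derivative (\<lambda>t. OYf k ps t j) (at t) h = 0"
  proof
    fix j assume j: "j \<in> set (fl ps)"
    then have "j \<noteq> p" "j \<noteq> q" using d by auto
    then show "frechet_derivative (\<lambda>t. OYf k ps t j) (at t) h = 0"
      using Cons.prems(4) j OYf_cons_j[of j p q k ps] by (auto simp: pq)
  qed
  with Cons.IH d C have "\<forall>i\<in>set (fl ps). h$i = 0" unfolding DS_def by blast
  then show ?case using hp hq by (simp add: pq)
qed



lemma FF_imm:
  fixes \<beta> :: "'m::finite \<Rightarrow> 'n::finite option"
  assumes dist: "distinct (fl ps)" and cov: "set (fl ps) = UNIV - {k}" and sb: "surj \<beta>"
  shows "\<exists>D. ((FF k ps \<beta> \<circ> angle_param) has_derivative D) (at t) \<and> inj D"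
proof -
  define G where "G = (FF k ps \<beta> \<circ> angle_param)"
  have Gc: "(\<lambda>t. G t $ j) = (\<lambda>t. out k ps (\<lambda>i. cos (t$i)) (\<lambda>i. sin (t$i)) (\<beta> j))" for j
    unfolding G_def FF_angle by simp
  have "G differentiable (at t)"
    by (rule vec_differentiable) (simp add: Gc sm_differentiable sm_out)
  then have dG: "(G has_derivative frechet_derivative G (at t)) (at t)" using frechet_derivative_works by blast
  define D where "D = frechet_derivative G (at t)"
  have lin: "linear D" using dG unfolding D_def by (simp add: has_derivative_linear)
  have kn: "k \<notin> set (fl ps)" using cov by auto
  have "h = 0" if Dh: "D h = 0" for h
  proof -
    have O: "frechet_derivative (\<lambda>t. out k ps (\<lambda>i. cos (t$i)) (\<lambda>i. sin (t$i)) x) (at t) h = 0" for x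
    proof -
      obtain j where x: "x = \<beta> j" using sb by (metis surjD)
      have "(\<lambda>h. D h $ j) = frechet_derivative (\<lambda>t. G t $ j) (at t)"
        using comp_has_derivative[OF dG, of j] unfolding D_def by (rule frechet_derivative_at)
      then show ?thesis using Dh unfolding Gc x by (metis zero_index)
    qed
    define DS where "DS = frechet_derivative (Sf ps) (at t)"
    have d0: "(Sf ps has_derivative DS) (at t)"
      unfolding DS_def using sm_differentiable[OF sm_Sf] frechet_derivative_works by blast
    note dN = has_derivative_mult[OF d0 has_derivative_diff[OF has_derivative_mult[OF hd_cos[of k] hd_cos[of k]] has_derivative_mult[OF hd_sin[of k] hd_sin[of k]]]]
    note dK = has_derivative_mult[OF d0 has_derivative_mult[OF has_derivative_mult[OF has_derivative_const[of 2] hd_cos[of k]] hd_sin[of k]]]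
    have fN: "(\<lambda>t. out k ps (\<lambda>i. cos (t$i)) (\<lambda>i. sin (t$i)) None) = (\<lambda>t. Sf ps t * (cos (t$k) * cos (t$k) - sin (t$k) * sin (t$k)))"
      by (simp add: fun_eq_iff out_def Sf_def)
    have fK: "(\<lambda>t. out k ps (\<lambda>i. cos (t$i)) (\<lambda>i. sin (t$i)) (Some k)) = (\<lambda>t. Sf ps t * (2 * cos (t$k) * sin (t$k)))"
      by (simp add: fun_eq_iff out_def Sf_def)
    define X where "X = cos (t$k) * cos (t$k) - sin (t$k) * sin (t$k)"
    define Y where "Y = 2 * cos (t$k) * sin (t$k)"
    define S0 where "S0 = Sf ps t"
    have eN: "DS h * X - (2 * S0 * h$k) * Y = 0"
      using O[of None] unfolding fN frechet_derivative_at[OF dN, symmetric]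
      by (simp add: X_def Y_def S0_def algebra_simps)
    have eK: "DS h * Y + (2 * S0 * h$k) * X = 0"
      using O[of "Some k"] unfolding fK frechet_derivative_at[OF dK, symmetric]
      by (simp add: X_def Y_def S0_def algebra_simps)
    have "X^2 + Y^2 = (cos (t$k)^2 + sin (t$k)^2)^2" unfolding X_def Y_def
      by algebra
    then have XY: "X^2 + Y^2 = 1" by (simp only: sin_cos_squared_add2 power_one)
    have "DS h = 0 \<and> 2 * S0 * h$k = 0" using rot0[OF XY eN] eK by (simp add: algebra_simps)
    moreover have "S0 \<ge> 1" unfolding S0_def by (rule Sf_ge1)
    ultimately have hk: "h$k = 0" and DS0: "DS h = 0" by auto
    have "\<forall>j\<in>set (fl ps). frechet_derivative (\<lambda>t. OYf k ps t j) (at t) h = 0"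
    proof
      fix j assume "j \<in> set (fl ps)"
      then have "j \<noteq> k" using kn by auto
      then have "(\<lambda>t. out k ps (\<lambda>i. cos (t$i)) (\<lambda>i. sin (t$i)) (Some j)) = (\<lambda>t. OYf k ps t j)"
        by (simp add: fun_eq_iff out_def OYf_def)
      then show "frechet_derivative (\<lambda>t. OYf k ps t j) (at t) h = 0" using O[of "Some j"] by simp
    qed
    from imm[OF dist kn hk DS0[unfolded DS_def] this] have "\<forall>i\<in>set (fl ps). h$i = 0" .
    then have "h$i = 0" for i using hk cov by (cases "i = k") auto
    then show "h = 0" by (simp add: vec_eq_iff)
  qed
  then have "inj D" using lin by (simp add: linear_injective_0)
  then show ?thesis using dG unfolding D_def G_def by blast
qed

fun pr :: "'a list \<Rightarrow> ('a \<times> 'a) list" where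
  "pr (a#b#r) = (a,b) # pr r"
| "pr _ = []"

lemma fl_pr: "even (length xs) \<Longrightarrow> fl (pr xs) = xs"
  by (induction xs rule: pr.induct) auto

theorem mainTheorem12:
  fixes k :: "'n::finite"
  assumes "odd CARD('n)"
    and "CARD('m::finite) = CARD('n) + 1"
  shows "\<exists>F :: complex^'n \<Rightarrow> real^'m. smooth_embedding_K k F"
proof -
  obtain xs where xs: "set xs = UNIV - {k}" "distinct xs"
    using finite_distinct_list[of "UNIV - {k}"] by auto
  have "length xs = CARD('n) - 1" using xs distinct_card[OF xs(2)] by (simp add: card_Diff_singleton)
  then have ev: "even (length xs)" using assms(1) by (simp add: card_gt_0_iff)
  define ps where "ps = pr xs"
  have flp: "fl ps = xs" unfolding ps_def using fl_pr[OF ev] .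
  have "card (UNIV :: 'n option set) = CARD('n) + 1"
    by (simp add: UNIV_option_conv card_image)
  then obtain \<beta> :: "'m \<Rightarrow> 'n option" where "bij_betw \<beta> UNIV UNIV"
    using finite_same_card_bij[of "UNIV :: 'm set" "UNIV :: 'n option set"] assms(2) by auto
  then have sb: "surj \<beta>" by (simp add: bij_betw_def)
  have dist: "distinct (fl ps)" and cov: "set (fl ps) = UNIV - {k}" using xs flp by auto
  have kn: "k \<notin> set (fl ps)" using cov by auto
  have "smooth_embedding_K k (FF k ps \<beta>)"
    unfolding smooth_embedding_K_def
    using FF_smooth FF_inv[OF kn] FF_inj[OF dist cov sb] FF_imm[OF dist cov sb] by blast
  then show ?thesis by blast
qed


end
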